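(* Let $\mathcal{A}$ be a finite set of arms, $1\le B\le|\mathcal{A}|$, $\epsilon>0$, and fix a sequence of cost functions $c_1,\dots,c_T:\mathcal{A}\to[0,1]$. Let $C_i(a)=\sum_{t=1}^i c_t(a)$ and $\tilde C_i(a)=C_i(a)-p(a)$, where the $p(a)$, $a\in\mathcal{A}$, are independent exponential random variables with rate $\epsilon$ (mean $1/\epsilon$), the same for all rounds. Let $\tilde a_t^{*,j}$ be the $j$-th lowest arm after the first $t$ rounds according to $\tilde C_t$, and let $\tilde S_t^*=\{\tilde a_{t-1}^{*,j}: j\in[B]\}$. Then for every round $t$, \[\mathbb{E}\left[\mathbb{1}[\tilde a_t^{*,1}\notin\tilde S_t^*]\right]\le\mathbb{E}\left[\epsilon^B c_t(\tilde S_t^* )\right],\] where $c_t(S):=\min_{a\in S}c_t(a)$. *)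

theory Defs
  imports "HOL-Probability.Probability"
begin

definition cum_cost :: "(nat \<Rightarrow> 'a \<Rightarrow> real) \<Rightarrow> nat \<Rightarrow> 'a \<Rightarrow> real" where
  "cum_cost c i a = (\<Sum>s\<in>{1..i}. c s a)"

definition pert_cost :: "(nat \<Rightarrow> 'a \<Rightarrow> real) \<Rightarrow> ('a \<Rightarrow> real) \<Rightarrow> nat \<Rightarrow> 'a \<Rightarrow> real" where
  "pert_cost c p i a = cum_cost c i a - p a"

text \<open>Arms sorted from lowest to highest perturbed cumulative cost after i rounds
  (ties, a null event, broken by the linear order on arms; sort_key is stable).\<close>
definition ranked_arms :: "'a::linorder set \<Rightarrow> (nat \<Rightarrow> 'a \<Rightarrow> real) \<Rightarrow> ('a \<Rightarrow> real) \<Rightarrow> nat \<Rightarrow> 'a list" where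
  "ranked_arms A c p i = sort_key (pert_cost c p i) (sorted_list_of_set A)"

definition jth_arm :: "'a::linorder set \<Rightarrow> (nat \<Rightarrow> 'a \<Rightarrow> real) \<Rightarrow> ('a \<Rightarrow> real) \<Rightarrow> nat \<Rightarrow> nat \<Rightarrow> 'a" where
  "jth_arm A c p i j = ranked_arms A c p i ! (j - 1)"

definition top_set :: "'a::linorder set \<Rightarrow> nat \<Rightarrow> (nat \<Rightarrow> 'a \<Rightarrow> real) \<Rightarrow> ('a \<Rightarrow> real) \<Rightarrow> nat \<Rightarrow> 'a set" where
  "top_set A B c p t = {jth_arm A c p (t - 1) j | j. j \<in> {1..B}}"

definition set_cost :: "(nat \<Rightarrow> 'a \<Rightarrow> real) \<Rightarrow> nat \<Rightarrow> 'a set \<Rightarrow> real" where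
  "set_cost c t S = Min (c t ` S)"

definition pert_measure :: "'a set \<Rightarrow> real \<Rightarrow> ('a \<Rightarrow> real) measure" where
  "pert_measure A eps = PiM A (\<lambda>_. density lborel (exponential_density eps))"

end

theory Submission
  imports Defs
begin

lemma insort_key_cong_le:
  assumes "\<forall>a\<in>insert x (set ys). \<forall>b\<in>insert x (set ys). (f a \<le> f b) = (g a \<le> g b)"
  shows "insort_key f x ys = insort_key g x ys"
  using assms by (induction ys) auto

lemma sort_key_cong_le:
  assumes "\<forall>a\<in>set xs. \<forall>b\<in>set xs. ((f a::real) \<le> f b) = ((g a::real) \<le> g b)"
  shows "sort_key f xs = sort_key g xs"
  using assms
proof (induction xs)
  case Nil then show ?case by simp
next
  case (Cons x xs)
  then have "sort_key f xs = sort_key g xs" by simp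
  moreover have "insort_key f x (sort_key g xs) = insort_key g x (sort_key g xs)"
    by (rule insort_key_cong_le) (use Cons.prems in auto)
  ultimately show ?case by simp
qed

lemma ranked_props:
  assumes "finite A"
  shows "set (ranked_arms A c p i) = A" "distinct (ranked_arms A c p i)"
    "length (ranked_arms A c p i) = card A"
    "sorted (map (pert_cost c p i) (ranked_arms A c p i))"
  using assms by (auto simp: ranked_arms_def distinct_card)

lemma top_set_eq:
  assumes "finite A" "B \<le> card A"
  shows "top_set A B c p t = set (take B (ranked_arms A c p (t - 1)))"
proof -
  let ?xs = "ranked_arms A c p (t - 1)"
  have len: "length ?xs = card A" using ranked_props[OF assms(1)] by simp
  show ?thesis
    unfolding top_set_def jth_arm_def set_conv_nth
    using len assms(2)
    apply auto
    subgoal for j by (rule exI[of _ "j - 1"]) auto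
    subgoal for i by (rule exI[of _ "Suc i"]) auto
    done
qed

lemma top_card:
  assumes "finite A" "B \<le> card A"
  shows "top_set A B c p t \<subseteq> A" "card (top_set A B c p t) = B"
proof -
  let ?xs = "ranked_arms A c p (t - 1)"
  note r = ranked_props[OF assms(1), of c p "t - 1"]
  show "top_set A B c p t \<subseteq> A" unfolding top_set_eq[OF assms]
    using r(1) set_take_subset by metis
  show "card (top_set A B c p t) = B" unfolding top_set_eq[OF assms]
    using r(2,3) assms(2) by (simp add: distinct_card)
qed

lemma top_le:
  assumes "finite A" "B \<le> card A" "y \<in> top_set A B c p t" "z \<in> A - top_set A B c p t"
  shows "pert_cost c p (t - 1) y \<le> pert_cost c p (t - 1) z"
proof -
  let ?xs = "ranked_arms A c p (t - 1)"
  note r = ranked_props[OF assms(1), of c p "t - 1"]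
  from assms(3) obtain i where i: "i < B" "i < length ?xs" "?xs ! i = y"
    unfolding top_set_eq[OF assms(1,2)] by (auto simp: in_set_conv_nth)
  from assms(4) r(1) obtain j where j: "j < length ?xs" "?xs ! j = z"
    by (metis DiffD1 in_set_conv_nth)
  have "j \<ge> B"
  proof (rule ccontr)
    assume "\<not> B \<le> j"
    then have "z \<in> set (take B ?xs)" using j by (auto simp: in_set_conv_nth intro!: exI[of _ j])
    then show False using assms(4) unfolding top_set_eq[OF assms(1,2)] by simp
  qed
  then have "i \<le> j" using i by simp
  then show ?thesis using r(4) i j unfolding sorted_iff_nth_mono by (metis length_map nth_map)
qed

lemma top_eqI:
  assumes "finite A" "B \<le> card A" "S \<subseteq> A" "card S = B"
    "\<forall>y\<in>S. \<forall>z\<in>A - S. pert_cost c p (t - 1) y < pert_cost c p (t - 1) z"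
  shows "top_set A B c p t = S"
proof (rule ccontr)
  let ?T = "top_set A B c p t"
  note tc = top_card[OF assms(1,2), of c p t]
  assume ne: "?T \<noteq> S"
  have fS: "finite S" using assms(1,3) finite_subset by blast
  have fT: "finite ?T" using assms(1) tc(1) finite_subset by blast
  have "\<not> ?T \<subseteq> S" using ne card_subset_eq[OF fS] tc(2) assms(4) by metis
  then obtain z where z: "z \<in> ?T" "z \<notin> S" by blast
  have "\<not> S \<subseteq> ?T" using ne card_subset_eq[OF fT] tc(2) assms(4) by metis
  then obtain y where y: "y \<in> S" "y \<notin> ?T" by blast
  have "pert_cost c p (t - 1) z \<le> pert_cost c p (t - 1) y"
    using top_le[OF assms(1,2) z(1)] y assms(3) by blast
  moreover have "pert_cost c p (t - 1) y < pert_cost c p (t - 1) z"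
    using assms(5) y z tc(1) by blast
  ultimately show False by simp
qed

lemma first_props:
  assumes "finite A" "A \<noteq> {}"
  shows "jth_arm A c p t 1 \<in> A" "\<And>y. y \<in> A \<Longrightarrow> pert_cost c p t (jth_arm A c p t 1) \<le> pert_cost c p t y"
proof -
  let ?xs = "ranked_arms A c p t"
  note r = ranked_props[OF assms(1), of c p t]
  have len: "0 < length ?xs" using r(3) assms card_gt_0_iff by metis
  show "jth_arm A c p t 1 \<in> A" unfolding jth_arm_def using len r(1) by (metis diff_self_eq_0 nth_mem)
  fix y assume "y \<in> A"
  then obtain j where j: "j < length ?xs" "?xs ! j = y" using r(1) by (metis in_set_conv_nth)
  then show "pert_cost c p t (jth_arm A c p t 1) \<le> pert_cost c p t y"
    using r(4) len unfolding sorted_iff_nth_mono jth_arm_def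
    by (metis diff_self_eq_0 le0 length_map nth_map)
qed


lemma exp_real_ineq:
  fixes eps r c :: real assumes "eps > 0" "c \<ge> 0"
  shows "erlang_CDF 0 eps (r + c) - erlang_CDF 0 eps r \<le> eps * c * (1 - erlang_CDF 0 eps r)"
proof (cases "r \<ge> 0")
  case True
  have e: "exp (- eps * (r + c)) = exp (- eps * r) * exp (- (eps * c))"
    by (simp add: algebra_simps flip: exp_add)
  have "1 - exp (- (eps * c)) \<le> eps * c" using exp_ge_add_one_self[of "- (eps * c)"] by simp
  then have "exp (- eps * r) * (1 - exp (- (eps * c))) \<le> exp (- eps * r) * (eps * c)"
    by (intro mult_left_mono) auto
  moreover have e2: "exp (- (c * eps) - eps * r) = exp (- (c * eps)) * exp (- (eps * r))"
    by (simp add: exp_add[symmetric])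
  ultimately show ?thesis using True assms by (simp add: erlang_CDF_def e algebra_simps)
next
  case False
  have "1 - exp (- (eps * (r + c))) \<le> eps * (r + c)" using exp_ge_add_one_self[of "- (eps * (r + c))"] by simp
  moreover have "eps * (r + c) \<le> eps * c" using False assms by simp
  ultimately show ?thesis using False assms by (simp add: erlang_CDF_def algebra_simps)
qed

lemma exp_window:
  fixes eps r c :: real assumes "eps > 0" "c \<ge> 0"
  shows "emeasure (density lborel (exponential_density eps)) {r..r+c}
     \<le> ennreal (eps * c) * emeasure (density lborel (exponential_density eps)) {r<..}"
proof -
  define D where "D = density lborel (exponential_density eps)"
  interpret prob_space D unfolding D_def using prob_space_exponential_density[OF assms(1)] .
  have sp[simp]: "space D = UNIV" "sets D = sets borel" unfolding D_def by auto
  have F: "measure D {..a} = erlang_CDF 0 eps a" for a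
  proof -
    have "emeasure D {..a} = ennreal (erlang_CDF 0 eps a)"
      unfolding D_def using emeasure_erlang_density[OF assms(1)] by simp
    moreover have "erlang_CDF 0 eps a \<ge> 0" using assms(1) by (simp add: erlang_CDF_def)
    ultimately show ?thesis by (simp add: emeasure_eq_measure)
  qed
  have single: "measure D {r} = 0"
  proof -
    have "emeasure D {r} = (\<integral>\<^sup>+ x. ennreal (exponential_density eps x) * indicator {r} x \<partial>lborel)"
      unfolding D_def by (subst emeasure_density) auto
    also have "\<dots> = (\<integral>\<^sup>+ x. 0 \<partial>(lborel::real measure))"
    proof (rule nn_integral_cong_AE)
      show "AE x in lborel. ennreal (exponential_density eps x) * indicator {r} x = 0"
        using AE_lborel_singleton[of r] by eventually_elim auto
    qed
    finally show ?thesis by (simp add: emeasure_eq_measure)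
  qed
  have "measure D {r..r+c} \<le> measure D (({..r+c} - {..r}) \<union> {r})"
    by (rule finite_measure_mono) auto
  also have "\<dots> \<le> measure D ({..r+c} - {..r}) + measure D {r}"
    by (rule measure_subadditive) auto
  also have "\<dots> = erlang_CDF 0 eps (r + c) - erlang_CDF 0 eps r"
    using assms(2) by (subst finite_measure_Diff) (auto simp: F single)
  also have "\<dots> \<le> eps * c * (1 - erlang_CDF 0 eps r)" by (rule exp_real_ineq[OF assms])
  also have "1 - erlang_CDF 0 eps r = measure D {r<..}"
  proof -
    have "{r<..} = space D - {..r}" by auto
    then have "measure D {r<..} = 1 - measure D {..r}" using prob_compl[of "{..r}"] by simp
    then show ?thesis by (simp add: F)
  qed
  finally have "measure D {r..r+c} \<le> eps * c * measure D {r<..}" .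
  then have "ennreal (measure D {r..r+c}) \<le> ennreal (eps * c * measure D {r<..})"
    by (rule ennreal_leI)
  also have "\<dots> = ennreal (eps * c) * ennreal (measure D {r<..})"
    using assms by (intro ennreal_mult) auto
  finally show ?thesis unfolding D_def[symmetric] by (simp only: emeasure_eq_measure)
qed


lemma key:
  fixes I J :: "'a set" and C w :: "'a \<Rightarrow> real" and eps :: real
  assumes fin: "finite I" "finite J" and disj: "I \<inter> J = {}" and ne: "I \<noteq> {}" and eps: "eps > 0"
    and w: "\<forall>y\<in>J. 0 \<le> w y"
  defines "D \<equiv> density lborel (exponential_density eps)"
  defines "Mx \<equiv> \<lambda>p. Max ((\<lambda>z. p z - C z) ` I)"
  defines "U \<equiv> {p\<in>space (PiM (I \<union> J) (\<lambda>_. D)). \<forall>y\<in>J. C y + Mx p \<le> p y \<and> p y \<le> C y + Mx p + w y}"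
  defines "L \<equiv> {p\<in>space (PiM (I \<union> J) (\<lambda>_. D)). \<forall>y\<in>J. C y + Mx p < p y}"
  shows "U \<in> sets (PiM (I \<union> J) (\<lambda>_. D)) \<and> emeasure (PiM (I \<union> J) (\<lambda>_. D)) U \<le> ennreal (\<Prod>y\<in>J. eps * w y) * emeasure (PiM (I \<union> J) (\<lambda>_. D)) L"
proof -
  have pD: "prob_space D" unfolding D_def using prob_space_exponential_density[OF eps] .
  interpret product_sigma_finite "\<lambda>_::'a. D"
    unfolding product_sigma_finite_def using prob_space_imp_sigma_finite[OF pD] by simp
  have spD[simp]: "space D = UNIV" and setsD[simp]: "sets D = sets borel" unfolding D_def by auto
  let ?PM = "PiM (I \<union> J) (\<lambda>_. D)"
  have comp: "(\<lambda>p. p z) \<in> borel_measurable ?PM" if "z \<in> I \<union> J" for z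
    using measurable_component_singleton[OF that, of "\<lambda>_. D"] measurable_cong_sets[OF refl setsD]
    by blast
  have mcomp: "(\<lambda>p. p z - C z) \<in> borel_measurable ?PM" if "z \<in> I \<union> J" for z
    using that comp by (intro borel_measurable_diff) auto
  have mMx[measurable]: "Mx \<in> borel_measurable ?PM"
    unfolding Mx_def using fin(1) mcomp by (intro borel_measurable_Max) auto
  have mU: "U \<in> sets ?PM" unfolding U_def
  proof (rule sets.sets_Collect_finite_All[OF _ fin(2)])
    fix y assume y: "y \<in> J"
    have "y \<in> I \<union> J" using y by simp
    note cy = comp[OF this]
    have "{p \<in> space ?PM. C y + Mx p \<le> p y \<and> p y \<le> C y + Mx p + w y} =
       {p \<in> space ?PM. C y + Mx p \<le> p y} \<inter> {p \<in> space ?PM. p y \<le> C y + Mx p + w y}" by auto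
    also have "\<dots> \<in> sets ?PM"
      using cy mMx by (intro sets.Int borel_measurable_le borel_measurable_add) auto
    finally show "{p \<in> space ?PM. C y + Mx p \<le> p y \<and> p y \<le> C y + Mx p + w y} \<in> sets ?PM" .
  qed
  have mL: "L \<in> sets ?PM" unfolding L_def
  proof (rule sets.sets_Collect_finite_All[OF _ fin(2)])
    fix y assume y: "y \<in> J"
    have "y \<in> I \<union> J" using y by simp
    note cy = comp[OF this]
    show "{p \<in> space ?PM. C y + Mx p < p y} \<in> sets ?PM"
      using cy mMx by (intro borel_measurable_less borel_measurable_add) auto
  qed
  define k where "k = (\<Prod>y\<in>J. eps * w y)"
  have k0: "0 \<le> k" unfolding k_def using w eps by (auto intro!: prod_nonneg)
  have inner: "(\<integral>\<^sup>+ y. indicator U (merge I J (x, y)) \<partial>PiM J (\<lambda>_. D))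
      \<le> (\<integral>\<^sup>+ y. ennreal k * indicator L (merge I J (x, y)) \<partial>PiM J (\<lambda>_. D))"
    if x: "x \<in> space (PiM I (\<lambda>_. D))" for x
  proof -
    define W1 where "W1 = (\<lambda>j. {C j + Mx x .. C j + Mx x + w j})"
    define W2 where "W2 = (\<lambda>j. {C j + Mx x <..})"
    have msp: "merge I J (x, y) \<in> space ?PM" if "y \<in> space (PiM J (\<lambda>_. D))" for y
      using measurable_space[OF measurable_merge, of "(x, y)" I "\<lambda>_. D" J] x that
      by (simp add: space_pair_measure)
    have Mxm: "Mx (merge I J (x, y)) = Mx x" for y
      unfolding Mx_def by (intro arg_cong[where f=Max] image_cong) (auto simp: merge_def)
    have mj: "merge I J (x, y) j = y j" if "j \<in> J" for y j
      using that disj by (auto simp: merge_def)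
    have e1: "indicator U (merge I J (x, y)) = (indicator (PiE J W1) y :: ennreal)"
      if y: "y \<in> space (PiM J (\<lambda>_. D))" for y
    proof -
      have "merge I J (x, y) \<in> U \<longleftrightarrow> y \<in> PiE J W1"
        using msp[OF y] y unfolding U_def W1_def by (auto simp: mj space_PiM PiE_iff Mxm)
      then show ?thesis by (simp add: indicator_def)
    qed
    have e2: "indicator L (merge I J (x, y)) = (indicator (PiE J W2) y :: ennreal)"
      if y: "y \<in> space (PiM J (\<lambda>_. D))" for y
    proof -
      have "merge I J (x, y) \<in> L \<longleftrightarrow> y \<in> PiE J W2"
        using msp[OF y] y unfolding L_def W2_def by (auto simp: mj space_PiM PiE_iff Mxm)
      then show ?thesis by (simp add: indicator_def)
    qed
    have s1: "PiE J W1 \<in> sets (PiM J (\<lambda>_. D))" unfolding W1_def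
      using fin(2) by (intro sets_PiM_I_finite) auto
    have s2: "PiE J W2 \<in> sets (PiM J (\<lambda>_. D))" unfolding W2_def
      using fin(2) by (intro sets_PiM_I_finite) auto
    have "(\<integral>\<^sup>+ y. indicator U (merge I J (x, y)) \<partial>PiM J (\<lambda>_. D))
        = (\<integral>\<^sup>+ y. indicator (PiE J W1) y \<partial>PiM J (\<lambda>_. D))"
      by (rule nn_integral_cong) (simp add: e1)
    also have "\<dots> = emeasure (PiM J (\<lambda>_. D)) (PiE J W1)"
      using s1 by simp
    also have "\<dots> = (\<Prod>j\<in>J. emeasure D (W1 j))"
      using fin(2) unfolding W1_def by (intro emeasure_PiM) auto
    also have "\<dots> \<le> (\<Prod>j\<in>J. ennreal (eps * w j) * emeasure D (W2 j))"
      unfolding W1_def W2_def D_def using w eps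
      by (intro prod_mono_ennreal exp_window) auto
    also have "\<dots> = ennreal k * (\<Prod>j\<in>J. emeasure D (W2 j))"
    proof -
      have "(\<Prod>j\<in>J. ennreal (eps * w j)) = ennreal k"
        unfolding k_def using w eps by (intro prod_ennreal) auto
      then show ?thesis by (simp only: prod.distrib)
    qed
    also have "(\<Prod>j\<in>J. emeasure D (W2 j)) = emeasure (PiM J (\<lambda>_. D)) (PiE J W2)"
      using fin(2) unfolding W2_def by (intro emeasure_PiM[symmetric]) auto
    also have "ennreal k * \<dots> = (\<integral>\<^sup>+ y. ennreal k * indicator (PiE J W2) y \<partial>PiM J (\<lambda>_. D))"
      using s2 by (simp add: nn_integral_cmult_indicator)
    also have "\<dots> = (\<integral>\<^sup>+ y. ennreal k * indicator L (merge I J (x, y)) \<partial>PiM J (\<lambda>_. D))"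
      by (rule nn_integral_cong) (simp add: e2)
    finally show ?thesis .
  qed
  have "emeasure ?PM U = (\<integral>\<^sup>+ p. indicator U p \<partial>?PM)" using mU by simp
  also have "\<dots> = (\<integral>\<^sup>+ x. (\<integral>\<^sup>+ y. indicator U (merge I J (x, y)) \<partial>PiM J (\<lambda>_. D)) \<partial>PiM I (\<lambda>_. D))"
    using mU by (intro product_nn_integral_fold disj fin) auto
  also have "\<dots> \<le> (\<integral>\<^sup>+ x. (\<integral>\<^sup>+ y. ennreal k * indicator L (merge I J (x, y)) \<partial>PiM J (\<lambda>_. D)) \<partial>PiM I (\<lambda>_. D))"
    by (rule nn_integral_mono) (rule inner)
  also have "\<dots> = (\<integral>\<^sup>+ p. ennreal k * indicator L p \<partial>?PM)"
    using mL by (intro product_nn_integral_fold[symmetric] disj fin) auto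
  also have "\<dots> = ennreal k * emeasure ?PM L"
    using mL by (simp add: nn_integral_cmult_indicator)
  finally have "emeasure ?PM U \<le> ennreal k * emeasure ?PM L" .
  then have "emeasure ?PM U \<le> ennreal (\<Prod>y\<in>J. eps * w y) * emeasure ?PM L" by (simp only: k_def)
  with mU show ?thesis by (rule conjI)
qed


lemma measurable_factor:
  assumes "finite R" "\<And>p. p \<in> space M \<Longrightarrow> \<Phi> p \<in> R"
    "\<And>\<phi>. \<phi> \<in> R \<Longrightarrow> {p \<in> space M. \<Phi> p = \<phi>} \<in> sets M"
    "\<And>p q. p \<in> space M \<Longrightarrow> q \<in> space M \<Longrightarrow> \<Phi> p = \<Phi> q \<Longrightarrow> h p = h q"
  shows "h \<in> measurable M (count_space UNIV)"
proof (rule measurableI)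
  fix X
  define R' where "R' = {\<phi>\<in>R. \<exists>q\<in>space M. \<Phi> q = \<phi> \<and> h q \<in> X}"
  have "h -` X \<inter> space M = (\<Union>\<phi>\<in>R'. {p \<in> space M. \<Phi> p = \<phi>})"
  proof (intro equalityI subsetI)
    fix p assume "p \<in> h -` X \<inter> space M"
    then have p: "p \<in> space M" "h p \<in> X" by auto
    have "\<Phi> p \<in> R'" unfolding R'_def using p assms(2)[OF p(1)] by auto
    then show "p \<in> (\<Union>\<phi>\<in>R'. {p \<in> space M. \<Phi> p = \<phi>})" by (rule UN_I) (simp add: p)
  next
    fix p assume "p \<in> (\<Union>\<phi>\<in>R'. {p \<in> space M. \<Phi> p = \<phi>})"
    then obtain \<phi> where ph: "\<phi> \<in> R'" "p \<in> space M" "\<Phi> p = \<phi>" by auto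
    then obtain q where q: "q \<in> space M" "\<Phi> q = \<phi>" "h q \<in> X" unfolding R'_def by auto
    have "h p = h q" using assms(4)[OF ph(2) q(1)] ph(3) q(2) by simp
    then show "p \<in> h -` X \<inter> space M" using q(3) ph(2) by simp
  qed
  also have "\<dots> \<in> sets M"
  proof (rule sets.finite_UN)
    show "finite R'" unfolding R'_def using assms(1) by simp
    fix \<phi> assume "\<phi> \<in> R'"
    then show "{p \<in> space M. \<Phi> p = \<phi>} \<in> sets M" unfolding R'_def using assms(3) by simp
  qed
  finally show "h -` X \<inter> space M \<in> sets M" .
next
  fix x show "h x \<in> space (count_space UNIV)" by simp
qed

lemma cum_cost_step: "1 \<le> t \<Longrightarrow> cum_cost c t a = cum_cost c (t - 1) a + c t a"
proof -
  assume "1 \<le> t"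
  then obtain n where n: "t = Suc n" by (cases t) auto
  show ?thesis unfolding cum_cost_def n by simp
qed

lemma prod_le_min:
  fixes f :: "'a \<Rightarrow> real"
  assumes "finite S" "S \<noteq> {}" "\<forall>y\<in>S. 0 \<le> f y \<and> f y \<le> 1"
  shows "prod f S \<le> Min (f ` S)"
proof -
  have "Min (f ` S) \<in> f ` S" using assms(1,2) by (intro Min_in) auto
  then obtain m where m: "m \<in> S" "f m = Min (f ` S)" by (auto simp: image_iff)
  have "prod f S = f m * prod f (S - {m})" using m(1) assms(1) by (simp add: prod.remove)
  also have "\<dots> \<le> f m * 1"
    using assms(3) m(1) by (intro mult_left_mono prod_le_1) auto
  finally show ?thesis using m by simp
qed


theorem lemma4:
  fixes A :: "'a::linorder set" and B T t :: nat and eps :: real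
    and c :: "nat \<Rightarrow> 'a \<Rightarrow> real"
  assumes "finite A"
    and "1 \<le> B" and "B \<le> card A"
    and "eps > 0"
    and "\<And>s a. s \<in> {1..T} \<Longrightarrow> a \<in> A \<Longrightarrow> 0 \<le> c s a \<and> c s a \<le> 1"
    and "t \<in> {1..T}"
  shows "(\<integral>p. (if jth_arm A c p t 1 \<notin> top_set A B c p t then 1 else 0) \<partial>pert_measure A eps)
         \<le> (\<integral>p. eps ^ B * set_cost c t (top_set A B c p t) \<partial>pert_measure A eps)"
proof -
  note finA = assms(1)
  have t1: "1 \<le> t" using assms(6) by simp
  have cb: "\<And>a. a \<in> A \<Longrightarrow> 0 \<le> c t a \<and> c t a \<le> 1" using assms(5) assms(6) by blast
  have Ane: "A \<noteq> {}" using assms(2,3) by auto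
  define D where "D = density lborel (exponential_density eps)"
  let ?P = "pert_measure A eps"
  have Pdef: "?P = PiM A (\<lambda>_. D)" unfolding pert_measure_def D_def ..
  interpret P: prob_space ?P unfolding Pdef D_def
    by (intro prob_space_PiM prob_space_exponential_density assms(4))
  have setsD: "sets D = sets borel" unfolding D_def by simp
  have comp: "(\<lambda>p. p a) \<in> borel_measurable ?P" if "a \<in> A" for a
    unfolding Pdef
    using measurable_component_singleton[OF that, of "\<lambda>_. D"] measurable_cong_sets[OF refl setsD]
    by blast
  have mpc: "(\<lambda>p. pert_cost c p i a) \<in> borel_measurable ?P" if "a \<in> A" for a i
    unfolding pert_cost_def using comp[OF that] by (intro borel_measurable_diff) auto

  define D0 where "D0 = {t - 1, t} \<times> A \<times> A"
  define \<Phi> where "\<Phi> p = {x\<in>D0. pert_cost c p (fst x) (fst (snd x)) \<le> pert_cost c p (fst x) (snd (snd x))}" for p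
  have finD0: "finite D0" unfolding D0_def using finA by simp
  have \<Phi>R: "\<Phi> p \<in> Pow D0" for p unfolding \<Phi>_def by auto
  have \<Phi>sets: "{p \<in> space ?P. \<Phi> p = \<phi>} \<in> sets ?P" if "\<phi> \<in> Pow D0" for \<phi>
  proof -
    have "{p \<in> space ?P. \<Phi> p = \<phi>} = {p \<in> space ?P. \<forall>x\<in>D0.
        (pert_cost c p (fst x) (fst (snd x)) \<le> pert_cost c p (fst x) (snd (snd x))) = (x \<in> \<phi>)}"
      using that unfolding \<Phi>_def by blast
    also have "\<dots> \<in> sets ?P"
    proof (rule sets.sets_Collect_finite_All[OF _ finD0])
      fix x assume x: "x \<in> D0"
      then have a: "fst (snd x) \<in> A" "snd (snd x) \<in> A" unfolding D0_def by auto
      note m1 = mpc[OF a(1), of "fst x"] and m2 = mpc[OF a(2), of "fst x"]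
      show "{p \<in> space ?P. (pert_cost c p (fst x) (fst (snd x)) \<le> pert_cost c p (fst x) (snd (snd x))) = (x \<in> \<phi>)} \<in> sets ?P"
      proof (cases "x \<in> \<phi>")
        case True
        then show ?thesis using borel_measurable_le[OF m1 m2] by simp
      next
        case False
        then show ?thesis using borel_measurable_less[OF m2 m1] by (simp add: not_le)
      qed
    qed
    finally show ?thesis .
  qed
  have ranked_eq: "ranked_arms A c p i = ranked_arms A c q i" if "\<Phi> p = \<Phi> q" "i \<in> {t - 1, t}" for p q i
    unfolding ranked_arms_def
  proof (rule sort_key_cong_le, intro ballI)
    fix a b assume "a \<in> set (sorted_list_of_set A)" "b \<in> set (sorted_list_of_set A)"
    then have ab: "a \<in> A" "b \<in> A" using finA by auto
    have "(i, a, b) \<in> \<Phi> p \<longleftrightarrow> (i, a, b) \<in> \<Phi> q" using that(1) by simp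
    then show "(pert_cost c p i a \<le> pert_cost c p i b) = (pert_cost c q i a \<le> pert_cost c q i b)"
      using ab that(2) unfolding \<Phi>_def D0_def by auto
  qed
  have mtop: "(\<lambda>p. top_set A B c p t) \<in> measurable ?P (count_space UNIV)"
  proof (rule measurable_factor[of "Pow D0" _ \<Phi>])
    show "finite (Pow D0)" using finD0 by simp
    show "\<Phi> p \<in> Pow D0" for p by (rule \<Phi>R)
    show "{p \<in> space ?P. \<Phi> p = \<phi>} \<in> sets ?P" if "\<phi> \<in> Pow D0" for \<phi> using \<Phi>sets[OF that] .
    show "top_set A B c p t = top_set A B c q t" if "\<Phi> p = \<Phi> q" for p q
      unfolding top_set_def jth_arm_def using ranked_eq[OF that, of "t - 1"] by simp
  qed
  have mfirst: "(\<lambda>p. jth_arm A c p t 1) \<in> measurable ?P (count_space UNIV)"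
  proof (rule measurable_factor[of "Pow D0" _ \<Phi>])
    show "finite (Pow D0)" using finD0 by simp
    show "\<Phi> p \<in> Pow D0" for p by (rule \<Phi>R)
    show "{p \<in> space ?P. \<Phi> p = \<phi>} \<in> sets ?P" if "\<phi> \<in> Pow D0" for \<phi> using \<Phi>sets[OF that] .
    show "jth_arm A c p t 1 = jth_arm A c q t 1" if "\<Phi> p = \<Phi> q" for p q
      unfolding jth_arm_def using ranked_eq[OF that, of t] by simp
  qed

  define top where "top p = top_set A B c p t" for p
  define first where "first p = jth_arm A c p t 1" for p
  define E where "E S = {p \<in> space ?P. top p = S \<and> first p \<notin> S}" for S
  define TT where "TT S = {p \<in> space ?P. top p = S}" for S
  have Esets: "E S \<in> sets ?P" for S
  proof -
    have "E S = ((\<lambda>p. top_set A B c p t) -` {S} \<inter> space ?P) \<inter> ((\<lambda>p. jth_arm A c p t 1) -` (- S) \<inter> space ?P)"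
      unfolding E_def top_def first_def by auto
    then show ?thesis using measurable_sets[OF mtop, of "{S}"] measurable_sets[OF mfirst, of "- S"] by auto
  qed
  have Tsets: "TT S \<in> sets ?P" for S
  proof -
    have "TT S = ((\<lambda>p. top_set A B c p t) -` {S} \<inter> space ?P)"
      unfolding TT_def top_def by auto
    then show ?thesis using measurable_sets[OF mtop, of "{S}"] by auto
  qed

  define SS where "SS = {S. S \<subseteq> A \<and> card S = B}"
  have finSS: "finite SS" unfolding SS_def using finA by simp
  have topSS: "top p \<in> SS" for p unfolding SS_def top_def using top_card[OF finA assms(3)] by auto

  have bound: "measure ?P (E S) \<le> eps ^ B * set_cost c t S * measure ?P (TT S)" if S: "S \<in> SS" for S
  proof -
    from S have SA: "S \<subseteq> A" and cS: "card S = B" unfolding SS_def by auto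
    have finS: "finite S" using finA SA finite_subset by blast
    have Sne: "S \<noteq> {}" using cS assms(2) by auto
    define k where "k = eps ^ B * set_cost c t S"
    have cost0: "0 \<le> set_cost c t S"
    proof -
      have "Min (c t ` S) \<in> c t ` S" using finS Sne by (intro Min_in) auto
      then show ?thesis unfolding set_cost_def using cb SA by auto
    qed
    have k0: "0 \<le> k" unfolding k_def using cost0 assms(4) by simp
    have prodk: "(\<Prod>y\<in>S. eps * c t y) \<le> k"
    proof -
      have "(\<Prod>y\<in>S. eps * c t y) = eps ^ B * (\<Prod>y\<in>S. c t y)"
        using cS by (simp add: prod.distrib)
      also have "\<dots> \<le> eps ^ B * set_cost c t S"
        unfolding set_cost_def using finS Sne cb SA assms(4)
        by (intro mult_left_mono prod_le_min) auto
      finally show ?thesis unfolding k_def .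
    qed
    show ?thesis
    proof (cases "S = A")
      case True
      have "E S = {}"
        unfolding E_def first_def using first_props(1)[OF finA Ane] True by auto
      then show ?thesis using k0 by (simp flip: k_def)
    next
      case False
      define C' where "C' = cum_cost c (t - 1)"
      define Mx where "Mx p = Max ((\<lambda>z. p z - C' z) ` (A - S))" for p :: "'a \<Rightarrow> real"
      define U where "U = {p\<in>space ?P. \<forall>y\<in>S. C' y + Mx p \<le> p y \<and> p y \<le> C' y + Mx p + c t y}"
      define L where "L = {p\<in>space ?P. \<forall>y\<in>S. C' y + Mx p < p y}"
      have IS: "(A - S) \<union> S = A" using SA by auto
      have Ine: "A - S \<noteq> {}" using SA False by auto
      have finI: "finite (A - S)" using finA by simp
      note K0 = key[where I="A - S" and J=S and C=C' and w="c t" and eps=eps,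
          OF finI finS _ Ine assms(4), unfolded IS]
      have K: "U \<in> sets ?P \<and> emeasure ?P U \<le> ennreal (\<Prod>y\<in>S. eps * c t y) * emeasure ?P L"
        unfolding U_def L_def Mx_def pert_measure_def
        by (rule K0) (use cb SA in auto)
      have EU: "E S \<subseteq> U"
      proof
        fix p assume "p \<in> E S"
        then have p: "p \<in> space ?P" "top_set A B c p t = S" "jth_arm A c p t 1 \<notin> S"
          unfolding E_def top_def first_def by auto
        let ?x = "jth_arm A c p t 1"
        have xI: "?x \<in> A - S" using first_props(1)[OF finA Ane] p(3) by auto
        have "C' y + Mx p \<le> p y \<and> p y \<le> C' y + Mx p + c t y" if y: "y \<in> S" for y
        proof
          have "Mx p \<le> p y - C' y"
            unfolding Mx_def
          proof (rule Max.boundedI)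
            show "finite ((\<lambda>z. p z - C' z) ` (A - S))" using finI by simp
            show "(\<lambda>z. p z - C' z) ` (A - S) \<noteq> {}" using Ine by simp
            fix v assume "v \<in> (\<lambda>z. p z - C' z) ` (A - S)"
            then obtain z where z: "z \<in> A - S" "v = p z - C' z" by auto
            have "pert_cost c p (t - 1) y \<le> pert_cost c p (t - 1) z"
              using top_le[OF finA assms(3), of y c p t z] p(2) y z(1) by simp
            then show "v \<le> p y - C' y" using z(2) unfolding pert_cost_def C'_def by simp
          qed
          then show "C' y + Mx p \<le> p y" by simp
          have "pert_cost c p t ?x \<le> pert_cost c p t y"
            using first_props(2)[OF finA Ane] y SA by auto
          then have "p y \<le> C' y + c t y - C' ?x - c t ?x + p ?x"
            unfolding pert_cost_def cum_cost_step[OF t1] C'_def by simp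
          moreover have "0 \<le> c t ?x" using cb xI by auto
          moreover have "p ?x - C' ?x \<le> Mx p"
            unfolding Mx_def using finI xI by (intro Max_ge) auto
          ultimately show "p y \<le> C' y + Mx p + c t y" by simp
        qed
        then show "p \<in> U" unfolding U_def using p(1) by auto
      qed
      have LT: "L \<subseteq> TT S"
      proof
        fix p assume "p \<in> L"
        then have p: "p \<in> space ?P" "\<forall>y\<in>S. C' y + Mx p < p y" unfolding L_def by auto
        have "top_set A B c p t = S"
        proof (rule top_eqI[OF finA assms(3) SA cS], intro ballI)
          fix y z assume y: "y \<in> S" and z: "z \<in> A - S"
          have "p z - C' z \<le> Mx p" unfolding Mx_def using finI z by (intro Max_ge) auto
          then show "pert_cost c p (t - 1) y < pert_cost c p (t - 1) z"
            using p(2) y unfolding pert_cost_def C'_def by force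
        qed
        then show "p \<in> TT S" unfolding TT_def top_def using p(1) by simp
      qed
      have "emeasure ?P (E S) \<le> emeasure ?P U" using EU K by (intro emeasure_mono) auto
      also have "\<dots> \<le> ennreal (\<Prod>y\<in>S. eps * c t y) * emeasure ?P L" using K by simp
      also have "\<dots> \<le> ennreal k * emeasure ?P (TT S)"
        using prodk LT Tsets by (intro mult_mono ennreal_leI emeasure_mono) auto
      finally have "ennreal (measure ?P (E S)) \<le> ennreal k * ennreal (measure ?P (TT S))"
        by (simp add: P.emeasure_eq_measure)
      also have "\<dots> = ennreal (k * measure ?P (TT S))" using k0 by (simp add: ennreal_mult)
      finally have "measure ?P (E S) \<le> k * measure ?P (TT S)"
        using k0 by (subst (asm) ennreal_le_iff) auto
      then show ?thesis unfolding k_def .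
    qed
  qed

  have LHS: "(\<integral>p. (if jth_arm A c p t 1 \<notin> top_set A B c p t then 1 else 0) \<partial>?P) = (\<Sum>S\<in>SS. measure ?P (E S))"
  proof -
    have "(\<integral>p. (if jth_arm A c p t 1 \<notin> top_set A B c p t then 1 else 0::real) \<partial>?P)
        = (\<integral>p. (\<Sum>S\<in>SS. indicator (E S) p) \<partial>?P)"
    proof (rule Bochner_Integration.integral_cong[OF refl])
      fix p assume p: "p \<in> space ?P"
      have "(\<Sum>S\<in>SS. indicator (E S) p :: real) = (\<Sum>S\<in>SS. if S = top p then (if first p \<notin> top p then 1 else 0) else 0)"
        by (rule sum.cong[OF refl]) (auto simp: E_def p indicator_def)
      also have "\<dots> = (if first p \<notin> top p then 1 else 0)"
        using finSS topSS[of p] by (simp add: sum.delta')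
      finally have "(if first p \<notin> top p then 1 else 0) = (\<Sum>S\<in>SS. indicator (E S) p :: real)" by simp
      then show "(if jth_arm A c p t 1 \<notin> top_set A B c p t then 1 else 0) = (\<Sum>S\<in>SS. indicator (E S) p :: real)"
        unfolding top_def first_def .
    qed
    also have "\<dots> = (\<Sum>S\<in>SS. (\<integral>p. indicator (E S) p \<partial>?P))"
      by (rule Bochner_Integration.integral_sum) (use Esets in \<open>auto intro!: integrable_real_indicator simp: less_top[symmetric]\<close>)
    also have "\<dots> = (\<Sum>S\<in>SS. measure ?P (E S))"
      using Esets by (intro sum.cong refl) (simp add: sets.Int_space_eq2)
    finally show ?thesis .
  qed
  have RHS: "(\<integral>p. eps ^ B * set_cost c t (top_set A B c p t) \<partial>?P) = (\<Sum>S\<in>SS. eps ^ B * set_cost c t S * measure ?P (TT S))"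
  proof -
    have "(\<integral>p. eps ^ B * set_cost c t (top_set A B c p t) \<partial>?P)
        = (\<integral>p. (\<Sum>S\<in>SS. eps ^ B * set_cost c t S * indicator (TT S) p) \<partial>?P)"
    proof (rule Bochner_Integration.integral_cong[OF refl])
      fix p assume p: "p \<in> space ?P"
      have "(\<Sum>S\<in>SS. eps ^ B * set_cost c t S * indicator (TT S) p :: real) = (\<Sum>S\<in>SS. if S = top p then eps ^ B * set_cost c t S else 0)"
        by (rule sum.cong[OF refl]) (auto simp: TT_def p indicator_def)
      also have "\<dots> = eps ^ B * set_cost c t (top p)"
        using finSS topSS[of p] by (simp add: sum.delta')
      finally show "eps ^ B * set_cost c t (top_set A B c p t) = (\<Sum>S\<in>SS. eps ^ B * set_cost c t S * indicator (TT S) p :: real)"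
        unfolding top_def by (rule sym)
    qed
    also have "\<dots> = (\<Sum>S\<in>SS. (\<integral>p. eps ^ B * set_cost c t S * indicator (TT S) p \<partial>?P))"
      by (rule Bochner_Integration.integral_sum) (use Tsets in \<open>auto intro!: integrable_real_indicator integrable_mult_right simp: less_top[symmetric]\<close>)
    also have "\<dots> = (\<Sum>S\<in>SS. eps ^ B * set_cost c t S * measure ?P (TT S))"
      using Tsets by (intro sum.cong refl) (simp add: sets.Int_space_eq2)
    finally show ?thesis .
  qed
  show ?thesis unfolding LHS RHS by (rule sum_mono) (rule bound)
qed

end
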